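(* Let $A\subset E$ be nonempty, and suppose that the problem $$\min_L \xi(L)\quad\text{s.t. } L\text{ is a lower contour set in } A$$ admits a solution (a minimizer). Then it has a largest minimizer, i.e. a minimizer $L^\star$ such that every minimizer $L$ satisfies $L\subset L^\star$.
   Context: $E$ is a finite or countably infinite set with a preorder $\precsim$ (reflexive and transitive) such that for every sequence $e_1\succsim e_2\succsim\cdots$ in $E$ there is $N\ge1$ with $e_N\precsim e_n$ for all $n\ge N$. $\pi_0\in(0,1)$; $F_G,F_B$ are probability distributions on $E$ such that every $e\in E$ has $F_G(e)>0$ or $F_B(e)>0$. For nonempty $B\subset E$, $\nu(B)=\frac{F_G(B)\pi_0}{F_G(B)\pi_0+F_B(B)(1-\pi_0)}$ and $\xi(B)=\phi(\nu(B))$, where $\phi:[0,1]\to\mathbb{R}$ is strictly increasing. For nonempty $A\subset E$, a nonempty $L\subset A$ is a lower contour set in $A$ if for all $e\in L$ and $e'\in A$, $e'\precsim e$ implies $e'\in L$. *)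

theory Defs
  imports "HOL-Analysis.Analysis"
begin

definition prob_of :: "('a \<Rightarrow> real) \<Rightarrow> 'a set \<Rightarrow> real" where
  "prob_of p B = infsum p B"

definition nu :: "real \<Rightarrow> ('a \<Rightarrow> real) \<Rightarrow> ('a \<Rightarrow> real) \<Rightarrow> 'a set \<Rightarrow> real" where
  "nu \<pi>0 pG pB B = prob_of pG B * \<pi>0 / (prob_of pG B * \<pi>0 + prob_of pB B * (1 - \<pi>0))"

definition xi :: "(real \<Rightarrow> real) \<Rightarrow> real \<Rightarrow> ('a \<Rightarrow> real) \<Rightarrow> ('a \<Rightarrow> real) \<Rightarrow> 'a set \<Rightarrow> real" where
  "xi \<phi> \<pi>0 pG pB B = \<phi> (nu \<pi>0 pG pB B)"

definition lower_contour :: "('a \<Rightarrow> 'a \<Rightarrow> bool) \<Rightarrow> 'a set \<Rightarrow> 'a set \<Rightarrow> bool" where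
  "lower_contour le A L \<longleftrightarrow> L \<noteq> {} \<and> L \<subseteq> A \<and>
     (\<forall>e\<in>L. \<forall>e'\<in>A. le e' e \<longrightarrow> e' \<in> L)"

definition is_minimizer ::
  "('a \<Rightarrow> 'a \<Rightarrow> bool) \<Rightarrow> ('a set \<Rightarrow> real) \<Rightarrow> 'a set \<Rightarrow> 'a set \<Rightarrow> bool" where
  "is_minimizer le f A L \<longleftrightarrow> lower_contour le A L \<and>
     (\<forall>L'. lower_contour le A L' \<longrightarrow> f L \<le> f L')"

end

theory Submission
  imports Defs
begin

theorem lemmaA5:
  fixes E :: "'a set" and le :: "'a \<Rightarrow> 'a \<Rightarrow> bool"
    and pG pB :: "'a \<Rightarrow> real" and \<pi>0 :: real and \<phi> :: "real \<Rightarrow> real"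
    and A :: "'a set"
  assumes countE: "countable E"
    and refl: "\<And>e. e \<in> E \<Longrightarrow> le e e"
    and trans: "\<And>x y z. x \<in> E \<Longrightarrow> y \<in> E \<Longrightarrow> z \<in> E \<Longrightarrow> le x y \<Longrightarrow> le y z \<Longrightarrow> le x z"
    and desc: "\<And>s :: nat \<Rightarrow> 'a. (\<And>n. s n \<in> E) \<Longrightarrow> (\<And>n. le (s (Suc n)) (s n)) \<Longrightarrow>
                 \<exists>N. \<forall>n\<ge>N. le (s N) (s n)"
    and pi0: "0 < \<pi>0" "\<pi>0 < 1"
    and pG_nonneg: "\<And>e. e \<in> E \<Longrightarrow> 0 \<le> pG e"
    and pB_nonneg: "\<And>e. e \<in> E \<Longrightarrow> 0 \<le> pB e"
    and pG_sum: "(pG has_sum 1) E"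
    and pB_sum: "(pB has_sum 1) E"
    and support: "\<And>e. e \<in> E \<Longrightarrow> pG e > 0 \<or> pB e > 0"
    and phi_mono: "strict_mono_on {0..1} \<phi>"
    and A_sub: "A \<subseteq> E" and A_ne: "A \<noteq> {}"
    and ex_min: "\<exists>L. is_minimizer le (xi \<phi> \<pi>0 pG pB) A L"
  shows "\<exists>Ls. is_minimizer le (xi \<phi> \<pi>0 pG pB) A Ls \<and>
           (\<forall>L. is_minimizer le (xi \<phi> \<pi>0 pG pB) A L \<longrightarrow> L \<subseteq> Ls)"
proof -
  define G where "G B = infsum pG B" for B :: "'a set"
  define P where "P B = infsum pB B" for B :: "'a set"
  define f where "f = xi \<phi> \<pi>0 pG pB"
  have nu_eq: "nu \<pi>0 pG pB B = G B * \<pi>0 / (G B * \<pi>0 + P B * (1 - \<pi>0))" for B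
    by (simp add: nu_def prob_of_def G_def P_def)
  have sG: "pG summable_on B" if "B \<subseteq> E" for B
    using summable_on_subset_banach[OF has_sum_imp_summable[OF pG_sum] that] .
  have sB: "pB summable_on B" if "B \<subseteq> E" for B
    using summable_on_subset_banach[OF has_sum_imp_summable[OF pB_sum] that] .
  have G0: "G B \<ge> 0" if "B \<subseteq> E" for B
    unfolding G_def using that pG_nonneg by (intro infsum_nonneg) auto
  have P0: "P B \<ge> 0" if "B \<subseteq> E" for B
    unfolding P_def using that pB_nonneg by (intro infsum_nonneg) auto
  have Gge: "G B \<ge> pG e" if "B \<subseteq> E" "e \<in> B" for B e
  proof -
    have "G B = infsum pG ({e} \<union> (B - {e}))" unfolding G_def using that
      by (metis insert_Diff insert_is_Un)
    also have "\<dots> = pG e + G (B - {e})" unfolding G_def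
      using that by (subst infsum_Un_disjoint) (auto intro!: sG)
    finally show ?thesis using G0[of "B - {e}"] that by auto
  qed
  have Pge: "P B \<ge> pB e" if "B \<subseteq> E" "e \<in> B" for B e
  proof -
    have "P B = infsum pB ({e} \<union> (B - {e}))" unfolding P_def using that
      by (metis insert_Diff insert_is_Un)
    also have "\<dots> = pB e + P (B - {e})" unfolding P_def
      using that by (subst infsum_Un_disjoint) (auto intro!: sB)
    finally show ?thesis using P0[of "B - {e}"] that by auto
  qed
  have Dpos: "G B * \<pi>0 + P B * (1 - \<pi>0) > 0" if BE: "B \<subseteq> E" and Bne: "B \<noteq> {}" for B
  proof -
    obtain e where e: "e \<in> B" using Bne by auto
    have "G B > 0 \<or> P B > 0" using Gge[OF BE e] Pge[OF BE e] support[of e] e BE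
      by force
    moreover have "G B * \<pi>0 \<ge> 0" "P B * (1 - \<pi>0) \<ge> 0" using G0 P0 BE pi0 by auto
    ultimately show ?thesis using pi0
      by (metis add_nonneg_pos add_pos_nonneg diff_gt_0_iff_gt mult_pos_pos)
  qed
  have nu01: "nu \<pi>0 pG pB B \<in> {0..1}" if "B \<subseteq> E" "B \<noteq> {}" for B
    using Dpos[OF that] G0[OF that(1)] P0[OF that(1)] pi0 unfolding nu_eq
    by (auto simp: divide_simps)
  have lcE: "L \<subseteq> E" "L \<noteq> {}" if "lower_contour le A L" for L
    using that A_sub unfolding lower_contour_def by auto
  obtain L0 where L0: "is_minimizer le f A L0" using ex_min f_def by auto
  define m where "m = nu \<pi>0 pG pB L0"
  have L0lc: "lower_contour le A L0" using L0 unfolding is_minimizer_def by auto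
  have m_le: "m \<le> nu \<pi>0 pG pB L" if "lower_contour le A L" for L
  proof (rule ccontr)
    assume "\<not> ?thesis"
    hence "nu \<pi>0 pG pB L < m" by auto
    hence "f L < f L0" unfolding f_def xi_def m_def
      using phi_mono nu01 lcE[OF that] lcE[OF L0lc]
      by (meson strict_mono_onD)
    thus False using L0 that unfolding is_minimizer_def by force
  qed
  have min_iff: "is_minimizer le f A L \<longleftrightarrow> lower_contour le A L \<and> nu \<pi>0 pG pB L \<le> m" for L
  proof
    assume a: "is_minimizer le f A L"
    hence lc: "lower_contour le A L" unfolding is_minimizer_def by auto
    show "lower_contour le A L \<and> nu \<pi>0 pG pB L \<le> m"
    proof (rule ccontr)
      assume "\<not> ?thesis"
      hence "m < nu \<pi>0 pG pB L" using lc by auto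
      hence "f L0 < f L" unfolding f_def xi_def m_def
        using phi_mono nu01 lcE[OF lc] lcE[OF L0lc]
        by (meson strict_mono_onD)
      thus False using a L0lc unfolding is_minimizer_def by force
    qed
  next
    assume a: "lower_contour le A L \<and> nu \<pi>0 pG pB L \<le> m"
    have "f L \<le> f L'" if "lower_contour le A L'" for L'
    proof -
      have "nu \<pi>0 pG pB L \<le> nu \<pi>0 pG pB L'" using a m_le[OF that] by auto
      thus ?thesis unfolding f_def xi_def
        using phi_mono nu01 lcE[OF that] lcE a
        by (metis order_le_less strict_mono_onD)
    qed
    thus "is_minimizer le f A L" using a unfolding is_minimizer_def by auto
  qed
  define h where "h e = pG e * (\<pi>0 * (1 - m)) + pB e * (- (m * (1 - \<pi>0)))" for e
  define H where "H B = infsum h B" for B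
  have sh: "h summable_on B" if "B \<subseteq> E" for B
    unfolding h_def using sG[OF that] sB[OF that]
    by (intro summable_on_add summable_on_cmult_left)
  have H_eq: "H B = G B * \<pi>0 * (1 - m) - m * (P B * (1 - \<pi>0))" if "B \<subseteq> E" for B
  proof -
    have "H B = infsum (\<lambda>e. pG e * (\<pi>0 * (1 - m))) B + infsum (\<lambda>e. pB e * (- (m * (1 - \<pi>0)))) B"
      unfolding H_def h_def using sG[OF that] sB[OF that]
      by (intro infsum_add summable_on_cmult_left)
    also have "\<dots> = G B * (\<pi>0 * (1 - m)) + P B * (- (m * (1 - \<pi>0)))"
      unfolding G_def P_def using sG[OF that] sB[OF that] by (intro arg_cong2[where f="(+)"] infsum_cmult_left)
    finally show ?thesis by (simp add: algebra_simps)
  qed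
  have nu_le_iff: "nu \<pi>0 pG pB B \<le> m \<longleftrightarrow> H B \<le> 0" if "B \<subseteq> E" "B \<noteq> {}" for B
    using Dpos[OF that] unfolding nu_eq H_eq[OF that(1)]
    by (simp add: divide_simps algebra_simps)
  have nu_ge_iff: "nu \<pi>0 pG pB B \<ge> m \<longleftrightarrow> H B \<ge> 0" if "B \<subseteq> E" "B \<noteq> {}" for B
    using Dpos[OF that] unfolding nu_eq H_eq[OF that(1)]
    by (simp add: divide_simps algebra_simps)
  have min_iffH: "is_minimizer le f A L \<longleftrightarrow> lower_contour le A L \<and> H L \<le> 0" for L
    using min_iff nu_le_iff lcE by blast
  have union2: "is_minimizer le f A (L1 \<union> L2)"
    if m1: "is_minimizer le f A L1" and m2: "is_minimizer le f A L2" for L1 L2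
  proof -
    have lc1: "lower_contour le A L1" and h1: "H L1 \<le> 0" using m1 min_iffH by auto
    have lc2: "lower_contour le A L2" and h2: "H L2 \<le> 0" using m2 min_iffH by auto
    have E1: "L1 \<subseteq> E" and E2: "L2 \<subseteq> E" using lcE lc1 lc2 by auto
    have lcU: "lower_contour le A (L1 \<union> L2)" using lc1 lc2 unfolding lower_contour_def by blast
    have HU: "H (L1 \<union> L2) = H L1 + H L2 - H (L1 \<inter> L2)"
      unfolding H_def using E1 E2 by (intro infsum_Un_Int sh) auto
    have "H (L1 \<inter> L2) \<ge> 0"
    proof (cases "L1 \<inter> L2 = {}")
      case True thus ?thesis by (simp add: H_def)
    next
      case False
      hence "lower_contour le A (L1 \<inter> L2)" using lc1 lc2 unfolding lower_contour_def by blast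
      thus ?thesis using m_le nu_ge_iff E1 False by blast
    qed
    thus ?thesis using HU h1 h2 lcU min_iffH by auto
  qed
  define M where "M = \<Union>{L. is_minimizer le f A L}"
  have finite_cover: "\<exists>U. is_minimizer le f A U \<and> F \<subseteq> U" if "finite F" "F \<subseteq> M" for F
    using that
  proof (induction F rule: finite_induct)
    case empty thus ?case using L0 by auto
  next
    case (insert x F)
    then obtain U where U: "is_minimizer le f A U" "F \<subseteq> U" by auto
    obtain L where L: "is_minimizer le f A L" "x \<in> L" using insert.prems unfolding M_def by auto
    show ?case using union2[OF U(1) L(1)] U L by auto
  qed
  have ME: "M \<subseteq> E" and Mne: "M \<noteq> {}"
    using L0 lcE unfolding M_def is_minimizer_def by blast+
  have lcM: "lower_contour le A M"
    unfolding lower_contour_def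
  proof (intro conjI ballI impI)
    show "M \<noteq> {}" by fact
    show "M \<subseteq> A" unfolding M_def is_minimizer_def lower_contour_def by blast
    fix e e' assume "e \<in> M" "e' \<in> A" "le e' e"
    then obtain L where "is_minimizer le f A L" "e \<in> L" unfolding M_def by auto
    thus "e' \<in> M" using \<open>e' \<in> A\<close> \<open>le e' e\<close> unfolding M_def is_minimizer_def lower_contour_def
      by blast
  qed
  have HM: "H M \<le> 0"
  proof (rule ccontr)
    assume "\<not> ?thesis"
    hence dpos: "H M > 0" by auto
    define ah where "ah e = norm (h e)" for e
    have sah: "ah summable_on B" if "B \<subseteq> E" for B
      unfolding ah_def using sh[OF that] summable_on_iff_abs_summable_on_real by blast
    obtain F where F: "finite F" "F \<subseteq> M" "dist (sum ah F) (infsum ah M) \<le> H M / 2"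
      using infsum_finite_approximation[OF sah[OF ME], of "H M / 2"] dpos by auto
    obtain U where U: "is_minimizer le f A U" "F \<subseteq> U" using finite_cover[OF F(1) F(2)] by blast
    have UM: "U \<subseteq> M" using U unfolding M_def by auto
    have UE: "U \<subseteq> E" using UM ME by auto
    have HU: "H U \<le> 0" using U min_iffH by auto
    have split: "H M = H U + H (M - U)"
    proof -
      have "M = U \<union> (M - U)" using UM by auto
      hence "H M = infsum h (U \<union> (M - U))" unfolding H_def by simp
      also have "\<dots> = H U + H (M - U)" unfolding H_def using UE ME
        by (intro infsum_Un_disjoint sh) auto
      finally show ?thesis .
    qed
    have splitF: "infsum ah M = sum ah F + infsum ah (M - F)"
    proof -
      have "M = F \<union> (M - F)" using F by auto
      hence "infsum ah M = infsum ah (F \<union> (M - F))" by simp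
      also have "\<dots> = infsum ah F + infsum ah (M - F)" using F ME
        by (intro infsum_Un_disjoint sah) auto
      finally show ?thesis using F by simp
    qed
    have "norm (H (M - U)) \<le> infsum ah (M - U)"
      unfolding H_def ah_def
      using sah[of "M - U"] ME unfolding ah_def
      by (intro norm_infsum_bound) auto
    also have "\<dots> \<le> infsum ah (M - F)"
      using sah ME UM F U(2) by (intro infsum_mono_neutral) (auto simp: ah_def intro!: sah)
    also have "\<dots> \<le> H M / 2" using splitF F(3) by (simp add: dist_real_def)
    finally have "H (M - U) \<le> H M / 2" by simp
    thus False using split HU dpos by linarith
  qed
  have minM: "is_minimizer le f A M" using min_iffH lcM HM by auto
  show ?thesis unfolding f_def[symmetric]
    using minM unfolding M_def by blast
qed

end
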